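(* Let $A$ be a finite group of order $n\geq 2$. The number of subsets $S\subseteq A$ for which there exist subgroups $H,K$ of $A$ with $1<H\leq K<A$ such that $S\setminus K$ is a union of left $H$-cosets is at most $2^{3n/4+2(\log_2 n)^2}$. The same bound holds with right $H$-cosets in place of left $H$-cosets. *)

theory Defs
  imports "HOL-Algebra.Algebra"
begin

definition left_coset_union_set :: "('a, 'b) monoid_scheme \<Rightarrow> 'a set set" where
  "left_coset_union_set G = {S. S \<subseteq> carrier G \<and>
     (\<exists>H K. subgroup H G \<and> subgroup K G \<and> {\<one>\<^bsub>G\<^esub>} \<subset> H \<and> H \<subseteq> K \<and> K \<subset> carrier G \<and>
        (\<exists>C \<subseteq> lcosets\<^bsub>G\<^esub> H. S - K = \<Union>C))}"

definition right_coset_union_set :: "('a, 'b) monoid_scheme \<Rightarrow> 'a set set" where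
  "right_coset_union_set G = {S. S \<subseteq> carrier G \<and>
     (\<exists>H K. subgroup H G \<and> subgroup K G \<and> {\<one>\<^bsub>G\<^esub>} \<subset> H \<and> H \<subseteq> K \<and> K \<subset> carrier G \<and>
        (\<exists>C \<subseteq> rcosets\<^bsub>G\<^esub> H. S - K = \<Union>C))}"

end

theory Submission
  imports Defs
begin

lemma count_pair:
  fixes U K :: "'a set" and CS :: "'a set set"
  assumes fin: "finite U" and KU: "K \<subseteq> U"
    and CSU: "\<And>c. c \<in> CS \<Longrightarrow> c \<subseteq> U \<and> 2 \<le> card c"
    and disj: "\<And>a b. a \<in> CS \<Longrightarrow> b \<in> CS \<Longrightarrow> a \<noteq> b \<Longrightarrow> a \<inter> b = {}"
    and half: "2 * card K \<le> card U"
  shows "real (card {S. S \<subseteq> U \<and> (\<exists>C\<subseteq>CS. S - K = \<Union>C)}) \<le> 2 powr (3 * real (card U) / 4)"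
proof -
  define D where "D = {c\<in>CS. c \<inter> K = {}}"
  have finK: "finite K" using fin KU finite_subset by blast
  have DP: "D \<subseteq> Pow U" using CSU unfolding D_def by auto
  have finD: "finite D" using DP fin finite_subset by blast
  have sub: "{S. S \<subseteq> U \<and> (\<exists>C\<subseteq>CS. S - K = \<Union>C)} \<subseteq> (\<lambda>(A,C). A \<union> \<Union>C) ` (Pow K \<times> Pow D)"
  proof
    fix S assume "S \<in> {S. S \<subseteq> U \<and> (\<exists>C\<subseteq>CS. S - K = \<Union>C)}"
    then obtain C where C: "C \<subseteq> CS" "S - K = \<Union>C" by auto
    have CD: "C \<subseteq> D" using C unfolding D_def by blast
    have "S = (S \<inter> K) \<union> \<Union>C" using C by blast
    hence eq: "S = (\<lambda>(A,C). A \<union> \<Union>C) (S \<inter> K, C)" by simp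
    have mem: "(S \<inter> K, C) \<in> Pow K \<times> Pow D" using CD by auto
    show "S \<in> (\<lambda>(A,C). A \<union> \<Union>C) ` (Pow K \<times> Pow D)" by (rule image_eqI[where f="\<lambda>(A,C). A \<union> \<Union>C", OF eq mem])
  qed
  have c1: "card {S. S \<subseteq> U \<and> (\<exists>C\<subseteq>CS. S - K = \<Union>C)} \<le> 2 ^ card K * 2 ^ card D"
  proof -
    have "card {S. S \<subseteq> U \<and> (\<exists>C\<subseteq>CS. S - K = \<Union>C)} \<le> card ((\<lambda>(A,C). A \<union> \<Union>C) ` (Pow K \<times> Pow D))"
      using sub finK finD by (intro card_mono) auto
    also have "\<dots> \<le> card (Pow K \<times> Pow D)" by (rule card_image_le) (use finK finD in auto)
    also have "\<dots> = 2 ^ card K * 2 ^ card D" using finK finD by (simp add: card_cartesian_product card_Pow)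
    finally show ?thesis .
  qed
  have pd: "pairwise disjnt D" using disj unfolding D_def pairwise_def disjnt_def by auto
  have "2 * card D = (\<Sum>c\<in>D. 2)" by simp
  also have "\<dots> \<le> (\<Sum>c\<in>D. card c)" by (rule sum_mono) (use CSU D_def in auto)
  also have "\<dots> = card (\<Union>D)"
    using card_Union_disjoint[OF pd] DP fin finite_subset by (metis PowD subsetD)
  also have "\<dots> \<le> card (U - K)"
    using DP fin unfolding D_def by (intro card_mono) auto
  also have "\<dots> = card U - card K" using finK KU by (simp add: card_Diff_subset)
  finally have "2 * card D \<le> card U - card K" .
  hence r: "real (card K + card D) \<le> 3 * real (card U) / 4" using half card_mono[OF fin KU] by linarith
  have "real (card {S. S \<subseteq> U \<and> (\<exists>C\<subseteq>CS. S - K = \<Union>C)}) \<le> real (2 ^ (card K + card D))"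
    using c1 unfolding power_add of_nat_le_iff .
  also have "\<dots> = 2 powr real (card K + card D)"
  proof -
    have "(2::real) powr real (card K + card D) = 2 ^ (card K + card D)" by (rule powr_realpow) simp
    thus ?thesis by simp
  qed
  also have "\<dots> \<le> 2 powr (3 * real (card U) / 4)" using r by (intro powr_mono) auto
  finally show ?thesis .
qed

context group begin

lemma double_card:
  assumes fin: "finite (carrier G)" and J: "subgroup J G" and J': "subgroup J' G" and ss: "J \<subset> J'"
  shows "2 * card J \<le> card J'"
proof -
  obtain k where k: "k \<in> J'" "k \<notin> J" using ss by blast
  have kc: "k \<in> carrier G" using k J' subgroup.subset by blast
  have Jc: "J \<subseteq> carrier G" using J subgroup.subset by blast
  have kl: "k <# J \<in> lcosets J" using kc unfolding LCOSETS_def by blast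
  have Jl: "J \<in> lcosets J" using lcos_mult_one[OF Jc] one_closed unfolding LCOSETS_def by force
  have "k \<in> k <# J" using lcos_self[OF kc J] .
  hence ne: "k <# J \<noteq> J" using k by blast
  have dis: "J \<inter> (k <# J) = {}" using lcos_disjoint[OF J Jl kl] ne by auto
  have cc: "card (k <# J) = card J" using l_card_cosets_equal[OF kl Jc fin] by simp
  have sub: "J \<union> (k <# J) \<subseteq> J'"
    using ss k(1) J' unfolding l_coset_def by (auto intro: subgroup.m_closed)
  have finJ: "finite J" using fin Jc finite_subset by blast
  have finkJ: "finite (k <# J)" using fin l_coset_subset_G[OF Jc kc] finite_subset by blast
  have finJ': "finite J'" using fin J' subgroup.subset finite_subset by blast
  have "2 * card J = card (J \<union> (k <# J))" using card_Un_disjoint[OF finJ finkJ dis] cc by simp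
  also have "\<dots> \<le> card J'" using card_mono[OF finJ' sub] .
  finally show ?thesis .
qed

lemma gen_small_aux:
  assumes fin: "finite (carrier G)" and K: "subgroup K G"
  shows "Z \<subseteq> K \<Longrightarrow> finite Z \<Longrightarrow> 2 ^ card Z \<le> card (generate G Z) \<Longrightarrow>
     \<exists>Y. Y \<subseteq> K \<and> finite Y \<and> 2 ^ card Y \<le> card K \<and> generate G Y = K"
proof (induction "card K - card (generate G Z)" arbitrary: Z rule: less_induct)
  case less
  have Kc: "K \<subseteq> carrier G" using K subgroup.subset by blast
  have finK: "finite K" using fin Kc finite_subset by blast
  have gs: "generate G Z \<subseteq> K" using generate_subgroup_incl[OF less.prems(1) K] .
  show ?case
  proof (cases "generate G Z = K")
    case True thus ?thesis using less.prems by auto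
  next
    case False
    then obtain k where k: "k \<in> K" "k \<notin> generate G Z" using gs by blast
    define Z' where "Z' = insert k Z"
    have kX: "k \<notin> Z" using k(2) generate.incl[of k Z G] by blast
    have Z'K: "Z' \<subseteq> K" using k less.prems unfolding Z'_def by auto
    have Z'c: "Z' \<subseteq> carrier G" using Z'K Kc by blast
    have Xc: "Z \<subseteq> carrier G" using less.prems(1) Kc by blast
    have g1: "generate G Z \<subseteq> generate G Z'" unfolding Z'_def by (rule mono_generate) auto
    have "k \<in> generate G Z'" unfolding Z'_def by (rule generate.incl) simp
    hence ss: "generate G Z \<subset> generate G Z'" using g1 k by blast
    have gs': "generate G Z' \<subseteq> K" using generate_subgroup_incl[OF Z'K K] .
    have dc: "2 * card (generate G Z) \<le> card (generate G Z')"
      using double_card[OF fin generate_is_subgroup[OF Xc] generate_is_subgroup[OF Z'c] ss] .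
    have cX': "card Z' = Suc (card Z)" using less.prems(2) kX unfolding Z'_def by simp
    have p: "2 ^ card Z' \<le> card (generate G Z')" using dc less.prems(3) cX' by simp
    have fX': "finite Z'" using less.prems(2) unfolding Z'_def by simp
    have "card (generate G Z) < card (generate G Z')" using psubset_card_mono[OF finite_subset[OF gs' finK] ss] .
    moreover have "card (generate G Z') \<le> card K" using card_mono[OF finK gs'] .
    ultimately have "card K - card (generate G Z') < card K - card (generate G Z)" by linarith
    thus ?thesis using less.hyps Z'K fX' p by blast
  qed
qed

lemma gen_small:
  assumes fin: "finite (carrier G)" and K: "subgroup K G"
  shows "\<exists>Y. Y \<subseteq> K \<and> finite Y \<and> 2 ^ card Y \<le> card K \<and> generate G Y = K"
  by (rule gen_small_aux[OF fin K, of "{}"]) (auto simp: generate_empty)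

lemma generate_insert_one:
  assumes "Z \<subseteq> carrier G" shows "generate G (insert \<one> Z) = generate G Z"
proof
  show "generate G Z \<subseteq> generate G (insert \<one> Z)" by (rule mono_generate) auto
  show "generate G (insert \<one> Z) \<subseteq> generate G Z"
    by (rule generate_subgroup_incl) (auto intro: generate.one generate.incl generate_is_subgroup[OF assms])
qed

lemma count_subgroups:
  assumes fin: "finite (carrier G)" and n2: "card (carrier G) \<ge> 2"
  shows "real (card {H. subgroup H G}) \<le> 2 powr ((log 2 (card (carrier G)))\<^sup>2)"
proof -
  define n where "n = card (carrier G)"
  define L where "L = nat \<lfloor>log 2 n\<rfloor>"
  have npos: "real n \<ge> 2" using n2 n_def by simp
  have logpos: "log 2 n \<ge> 1" using npos by simp
  have LL: "real L \<le> log 2 n" using logpos unfolding L_def by linarith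
  have sub: "{H. subgroup H G} \<subseteq> (\<lambda>xs. generate G (set xs)) ` {xs. set xs \<subseteq> carrier G \<and> length xs = L}"
  proof
    fix K assume "K \<in> {H. subgroup H G}"
    hence K: "subgroup K G" by simp
    obtain Y where Y: "Y \<subseteq> K" "finite Y" "2 ^ card Y \<le> card K" "generate G Y = K"
      using gen_small[OF fin K] by blast
    have Kc: "K \<subseteq> carrier G" using K subgroup.subset by blast
    have Yc: "Y \<subseteq> carrier G" using Y Kc by blast
    have "card K \<le> n" unfolding n_def using card_mono[OF fin Kc] .
    hence "real (2 ^ card Y) \<le> real n" using Y(3) by linarith
    hence "2 powr real (card Y) \<le> real n" by (simp add: powr_realpow)
    hence "real (card Y) \<le> log 2 n" using npos by (simp add: le_log_iff)
    hence cY: "card Y \<le> L" unfolding L_def by linarith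
    obtain ys where ys: "set ys = Y" "length ys = card Y" using Y(2) distinct_card finite_distinct_list by metis
    define xs where "xs = ys @ replicate (L - card Y) \<one>"
    have lx: "length xs = L" using cY ys unfolding xs_def by simp
    have sx: "set xs \<subseteq> carrier G" using Yc ys unfolding xs_def by auto
    have "set xs = Y \<or> set xs = insert \<one> Y" unfolding xs_def using ys by (cases "L - card Y = 0") auto
    hence "generate G (set xs) = K" using generate_insert_one[OF Yc] Y(4) by auto
    thus "K \<in> (\<lambda>xs. generate G (set xs)) ` {xs. set xs \<subseteq> carrier G \<and> length xs = L}"
      using lx sx by blast
  qed
  have "card {H. subgroup H G} \<le> card ((\<lambda>xs. generate G (set xs)) ` {xs. set xs \<subseteq> carrier G \<and> length xs = L})"
    by (rule card_mono[OF _ sub]) (use fin finite_lists_length_eq in auto)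
  also have "\<dots> \<le> card {xs. set xs \<subseteq> carrier G \<and> length xs = L}" by (rule card_image_le) (use fin finite_lists_length_eq in auto)
  also have "\<dots> = n ^ L" unfolding n_def using card_lists_length_eq[OF fin] by simp
  finally have "real (card {H. subgroup H G}) \<le> real n ^ L" by (metis of_nat_le_iff of_nat_power)
  also have "\<dots> = (2 powr log 2 n) ^ L" using npos by simp
  also have "\<dots> = (2 powr log 2 n) powr real L" by (subst powr_realpow) auto
  also have "\<dots> = 2 powr (real L * log 2 n)" by (simp add: powr_powr mult.commute)
  also have "\<dots> \<le> 2 powr ((log 2 n)\<^sup>2)"
    using LL logpos by (intro powr_mono) (auto simp: power2_eq_square intro: mult_right_mono)
  finally show ?thesis unfolding n_def .
qed


lemma main_count:
  assumes fin: "finite (carrier G)" and n2: "card (carrier G) \<ge> 2"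
    and csU: "\<And>H c. subgroup H G \<Longrightarrow> c \<in> cs H \<Longrightarrow> c \<subseteq> carrier G \<and> card c = card H"
    and csD: "\<And>H a b. subgroup H G \<Longrightarrow> a \<in> cs H \<Longrightarrow> b \<in> cs H \<Longrightarrow> a \<noteq> b \<Longrightarrow> a \<inter> b = {}"
  shows "real (card {S. S \<subseteq> carrier G \<and> (\<exists>H K. subgroup H G \<and> subgroup K G \<and> {\<one>} \<subset> H \<and> H \<subseteq> K \<and> K \<subset> carrier G \<and>
        (\<exists>C \<subseteq> cs H. S - K = \<Union>C))})
     \<le> 2 powr (3 * real (card (carrier G)) / 4 + 2 * (log 2 (card (carrier G)))\<^sup>2)"
proof -
  define n where "n = card (carrier G)"
  define B where "B = 2 powr (3 * real n / 4)"
  define Q where "Q = 2 powr ((log 2 n)\<^sup>2)"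
  define Sub where "Sub = {H. subgroup H G}"
  define I where "I = {(H,K). H \<in> Sub \<and> K \<in> Sub \<and> {\<one>} \<subset> H \<and> H \<subseteq> K \<and> K \<subset> carrier G}"
  define T where "T p = {S. S \<subseteq> carrier G \<and> (\<exists>C\<subseteq>cs (fst p). S - snd p = \<Union>C)}" for p
  have finSub: "finite Sub"
  proof (rule finite_subset[of _ "Pow (carrier G)"])
    show "Sub \<subseteq> Pow (carrier G)" unfolding Sub_def using subgroup.subset by blast
  qed (use fin in auto)
  have finI: "finite I" using finite_subset[of I "Sub \<times> Sub"] finSub unfolding I_def by auto
  have set_sub: "{S. S \<subseteq> carrier G \<and> (\<exists>H K. subgroup H G \<and> subgroup K G \<and> {\<one>} \<subset> H \<and> H \<subseteq> K \<and> K \<subset> carrier G \<and>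
        (\<exists>C \<subseteq> cs H. S - K = \<Union>C))} \<subseteq> (\<Union>p\<in>I. T p)"
  proof
    fix S assume "S \<in> {S. S \<subseteq> carrier G \<and> (\<exists>H K. subgroup H G \<and> subgroup K G \<and> {\<one>} \<subset> H \<and> H \<subseteq> K \<and> K \<subset> carrier G \<and>
        (\<exists>C \<subseteq> cs H. S - K = \<Union>C))}"
    then obtain H K C where S: "S \<subseteq> carrier G" "subgroup H G" "subgroup K G" "{\<one>} \<subset> H" "H \<subseteq> K" "K \<subset> carrier G"
      "C \<subseteq> cs H" "S - K = \<Union>C" by blast
    have "(H,K) \<in> I" unfolding I_def Sub_def using S by simp
    moreover have "S \<in> T (H,K)" unfolding T_def using S by auto
    ultimately show "S \<in> (\<Union>p\<in>I. T p)" by blast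
  qed
  have finT: "finite (T p)" for p
    by (rule finite_subset[of _ "Pow (carrier G)"]) (use fin in \<open>auto simp: T_def\<close>)
  have Tb: "real (card (T p)) \<le> B" if p: "p \<in> I" for p
  proof -
    obtain H K where HK: "p = (H,K)" "subgroup H G" "subgroup K G" "{\<one>} \<subset> H" "H \<subseteq> K" "K \<subset> carrier G"
      using p unfolding I_def Sub_def by auto
    have finH: "finite H" using fin HK(2) subgroup.subset finite_subset by blast
    have "card {\<one>} < card H" by (rule psubset_card_mono[OF finH HK(4)])
    hence H2: "2 \<le> card H" by simp
    have dc: "2 * card K \<le> card (carrier G)"
      by (rule double_card[OF fin HK(3) subgroup_self HK(6)])
    have "real (card {S. S \<subseteq> carrier G \<and> (\<exists>C\<subseteq>cs H. S - K = \<Union>C)}) \<le> 2 powr (3 * real (card (carrier G)) / 4)"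
    proof (rule count_pair[OF fin])
      show "K \<subseteq> carrier G" using HK(6) by blast
      show "\<And>c. c \<in> cs H \<Longrightarrow> c \<subseteq> carrier G \<and> 2 \<le> card c" using csU[OF HK(2)] H2 by auto
      show "\<And>a b. a \<in> cs H \<Longrightarrow> b \<in> cs H \<Longrightarrow> a \<noteq> b \<Longrightarrow> a \<inter> b = {}" using csD[OF HK(2)] by blast
      show "2 * card K \<le> card (carrier G)" by (rule dc)
    qed
    thus ?thesis unfolding T_def B_def n_def HK(1) by simp
  qed
  have "card {S. S \<subseteq> carrier G \<and> (\<exists>H K. subgroup H G \<and> subgroup K G \<and> {\<one>} \<subset> H \<and> H \<subseteq> K \<and> K \<subset> carrier G \<and>
        (\<exists>C \<subseteq> cs H. S - K = \<Union>C))} \<le> card (\<Union>p\<in>I. T p)"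
    by (rule card_mono[OF _ set_sub]) (use finI finT in auto)
  also have "\<dots> \<le> (\<Sum>p\<in>I. card (T p))" by (rule card_UN_le[OF finI])
  finally have "real (card {S. S \<subseteq> carrier G \<and> (\<exists>H K. subgroup H G \<and> subgroup K G \<and> {\<one>} \<subset> H \<and> H \<subseteq> K \<and> K \<subset> carrier G \<and>
        (\<exists>C \<subseteq> cs H. S - K = \<Union>C))}) \<le> (\<Sum>p\<in>I. real (card (T p)))"
    unfolding of_nat_sum[symmetric] of_nat_le_iff .
  also have "\<dots> \<le> (\<Sum>p\<in>I. B)" by (rule sum_mono) (use Tb in auto)
  also have "\<dots> = real (card I) * B" by simp
  also have "\<dots> \<le> real (card Sub * card Sub) * B"
  proof -
    have "card I \<le> card (Sub \<times> Sub)" by (rule card_mono) (use finSub in \<open>auto simp: I_def\<close>)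
    hence "card I \<le> card Sub * card Sub" by (simp add: card_cartesian_product)
    hence "real (card I) \<le> real (card Sub * card Sub)" by (simp only: of_nat_le_iff)
    thus ?thesis unfolding B_def by (intro mult_right_mono) auto
  qed
  also have "\<dots> \<le> (Q * Q) * B"
  proof -
    have "real (card Sub) \<le> Q" unfolding Sub_def Q_def n_def using count_subgroups[OF fin n2] .
    hence "real (card Sub) * real (card Sub) \<le> Q * Q" by (intro mult_mono) auto
    thus ?thesis unfolding B_def by (intro mult_right_mono) auto
  qed
  also have "\<dots> = 2 powr (3 * real n / 4 + 2 * (log 2 n)\<^sup>2)"
    unfolding Q_def B_def by (simp add: powr_add[symmetric] add.commute)
  finally show ?thesis unfolding n_def .
qed

end



theorem lemma5p1:
  fixes G :: "('a, 'b) monoid_scheme"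
  assumes "group G" and "finite (carrier G)" and "card (carrier G) \<ge> 2"
  shows "real (card (left_coset_union_set G))
           \<le> 2 powr (3 * real (card (carrier G)) / 4 + 2 * (log 2 (card (carrier G)))\<^sup>2)
    \<and> real (card (right_coset_union_set G))
           \<le> 2 powr (3 * real (card (carrier G)) / 4 + 2 * (log 2 (card (carrier G)))\<^sup>2)"
proof -
  interpret group G by fact
  have l: "real (card (left_coset_union_set G))
           \<le> 2 powr (3 * real (card (carrier G)) / 4 + 2 * (log 2 (card (carrier G)))\<^sup>2)"
    unfolding left_coset_union_set_def
  proof (rule main_count[OF assms(2,3)])
    fix H c assume H: "subgroup H G" and c: "c \<in> lcosets\<^bsub>G\<^esub> H"
    show "c \<subseteq> carrier G \<and> card c = card H"
      using conjI[OF subgroup.lcosets_carrier[OF H is_group c] l_card_cosets_equal[OF c subgroup.subset[OF H] assms(2), symmetric]] .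
  next
    fix H a b assume "subgroup H G" "a \<in> lcosets\<^bsub>G\<^esub> H" "b \<in> lcosets\<^bsub>G\<^esub> H" "a \<noteq> b"
    thus "a \<inter> b = {}" by (rule lcos_disjoint)
  qed
  have r: "real (card (right_coset_union_set G))
           \<le> 2 powr (3 * real (card (carrier G)) / 4 + 2 * (log 2 (card (carrier G)))\<^sup>2)"
    unfolding right_coset_union_set_def
  proof (rule main_count[OF assms(2,3)])
    fix H c assume H: "subgroup H G" and c: "c \<in> rcosets\<^bsub>G\<^esub> H"
    obtain f where "bij_betw f H c" using card_cosets_equal[OF c subgroup.subset[OF H]] by blast
    hence "card H = card c" by (rule bij_betw_same_card)
    moreover have "c \<subseteq> carrier G" using rcosets_part_G[OF H] c by blast
    ultimately show "c \<subseteq> carrier G \<and> card c = card H" by (intro conjI) auto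
  next
    fix H a b assume "subgroup H G" "a \<in> rcosets\<^bsub>G\<^esub> H" "b \<in> rcosets\<^bsub>G\<^esub> H" "a \<noteq> b"
    thus "a \<inter> b = {}" using rcos_disjoint[of H] unfolding pairwise_def disjnt_def by blast
  qed
  show ?thesis using l r by (rule conjI)
qed

end
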